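(* Let $\mathcal{F}$ be a family of subsets of a finite set $E$ and $K\in\mathcal{F}$. Then $\mathcal{L}(M(\mathcal{F}-\{K\}))\subseteq\mathcal{L}(M(\mathcal{F}))$, i.e. every closed set of the transversal matroid $M(\mathcal{F}-\{K\})$ is a closed set of the transversal matroid $M(\mathcal{F})$.
   Context: For a family $\mathcal{F}$ of subsets of $E$, the transversal matroid $M(\mathcal{F})$ is the matroid on $E$ whose independent sets are the partial transversals of $\mathcal{F}$: sets $\{e_1,\dots,e_k\}$ of distinct elements with $e_j\in F_j$ for pairwise distinct members $F_1,\dots,F_k$ of $\mathcal{F}$. For a matroid $M$ with rank $r_M$, $cl_M(X)=\{a:r_M(X\cup\{a\})=r_M(X)\}$, and $\mathcal{L}(M)$ is the set of closed sets ($cl_M(X)=X$). $\mathcal{F}-\{K\}$ is the family obtained by removing the member $K$. *)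

theory Defs
  imports Main
begin

text \<open>A family of subsets of E is represented as an indexed family A :: 'i => 'e set
  over an index set I (so repeated members are allowed).  Removing the member K = A k
  corresponds to restricting the index set to I - {k}.\<close>

definition partial_transversal :: "'i set \<Rightarrow> ('i \<Rightarrow> 'e set) \<Rightarrow> 'e set \<Rightarrow> bool" where
  "partial_transversal I A X \<longleftrightarrow>
     finite X \<and> (\<exists>f. inj_on f X \<and> f ` X \<subseteq> I \<and> (\<forall>x\<in>X. x \<in> A (f x)))"

definition tm_rank :: "'e set \<Rightarrow> 'i set \<Rightarrow> ('i \<Rightarrow> 'e set) \<Rightarrow> 'e set \<Rightarrow> nat" where
  "tm_rank E I A X = Max {card Y | Y. Y \<subseteq> X \<inter> E \<and> partial_transversal I A Y}"

definition tm_cl :: "'e set \<Rightarrow> 'i set \<Rightarrow> ('i \<Rightarrow> 'e set) \<Rightarrow> 'e set \<Rightarrow> 'e set" where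
  "tm_cl E I A X = {a \<in> E. tm_rank E I A (X \<union> {a}) = tm_rank E I A X}"

definition tm_flats :: "'e set \<Rightarrow> 'i set \<Rightarrow> ('i \<Rightarrow> 'e set) \<Rightarrow> 'e set set" where
  "tm_flats E I A = {X. X \<subseteq> E \<and> tm_cl E I A X = X}"

end

theory Submission
  imports Defs
begin

lemma pt_mono_I: "partial_transversal I' A X \<Longrightarrow> I' \<subseteq> I \<Longrightarrow> partial_transversal I A X"
  unfolding partial_transversal_def by blast

lemma pt_subset: "partial_transversal I A X \<Longrightarrow> Y \<subseteq> X \<Longrightarrow> partial_transversal I A Y"
  unfolding partial_transversal_def
  by (meson finite_subset image_mono inj_on_subset order_trans subsetD)

lemma pt_empty: "partial_transversal I A {}"
  unfolding partial_transversal_def by auto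

lemma rank_fin:
  assumes "finite E"
  shows "finite {card Y |Y. Y \<subseteq> X \<inter> E \<and> partial_transversal I A Y}"
proof -
  have "{card Y |Y. Y \<subseteq> X \<inter> E \<and> partial_transversal I A Y} \<subseteq> {..card E}"
    using assms by (auto intro: card_mono)
  then show ?thesis using finite_subset by blast
qed

lemma rank_ge:
  assumes "finite E" "Y \<subseteq> X \<inter> E" "partial_transversal I A Y"
  shows "card Y \<le> tm_rank E I A X"
  unfolding tm_rank_def using rank_fin[OF assms(1)] assms(2,3)
  by (intro Max_ge) auto

lemma rank_obtain:
  assumes "finite E"
  obtains Y where "Y \<subseteq> X \<inter> E" "partial_transversal I A Y" "card Y = tm_rank E I A X"
proof -
  have "tm_rank E I A X \<in> {card Y |Y. Y \<subseteq> X \<inter> E \<and> partial_transversal I A Y}"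
    unfolding tm_rank_def
  proof (rule Max_in[OF rank_fin[OF assms(1)]])
    have "card {} \<in> {card Y |Y. Y \<subseteq> X \<inter> E \<and> partial_transversal I A Y}"
      by (rule CollectI, rule exI[of _ "{}"]) (simp add: pt_empty)
    then show "{card Y |Y. Y \<subseteq> X \<inter> E \<and> partial_transversal I A Y} \<noteq> {}" by blast
  qed
  then obtain Y where "tm_rank E I A X = card Y" "Y \<subseteq> X \<inter> E" "partial_transversal I A Y"
    unfolding mem_Collect_eq by (elim exE conjE)
  then show ?thesis using that by metis
qed

lemma pt_aug_aux:
  assumes fin: "finite X" "finite Y" and g: "inj_on g Y" "g ` Y \<subseteq> I" "\<forall>y\<in>Y. y \<in> A (g y)"
    and c: "card X < card Y"
  shows "inj_on f X \<Longrightarrow> f ` X \<subseteq> I \<Longrightarrow> \<forall>x\<in>X. x \<in> A (f x) \<Longrightarrow>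
     \<exists>y\<in>Y-X. partial_transversal I A (insert y X)"
proof (induction "card {x\<in>X. f x \<noteq> g x}" arbitrary: f rule: less_induct)
  case (less f)
  have "card (f ` X) \<le> card X" using fin card_image_le by blast
  also have "\<dots> < card (g ` Y)" using c g card_image by metis
  finally have "\<not> g ` Y \<subseteq> f ` X"
    using fin card_mono by (metis finite_imageI leD)
  then obtain y where y: "y \<in> Y" "g y \<notin> f ` X" by blast
  show ?case
  proof (cases "y \<in> X")
    case False
    have "partial_transversal I A (insert y X)"
      unfolding partial_transversal_def
    proof (intro conjI exI[of _ "f(y := g y)"])
      show "finite (insert y X)" using fin by simp
      have "inj_on (f(y := g y)) X = inj_on f X"
        by (rule inj_on_cong) (use False in auto)
      then have "inj_on (f(y := g y)) X" using less.prems(1) by simp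
      moreover have "(f(y := g y)) ` X = f ` X" using False by auto
      ultimately show "inj_on (f(y := g y)) (insert y X)" using y False by auto
      show "(f(y := g y)) ` insert y X \<subseteq> I" using less.prems(2) g y False by auto
      show "\<forall>x\<in>insert y X. x \<in> A ((f(y := g y)) x)" using less.prems(3) g y False by auto
    qed
    then show ?thesis using y False by blast
  next
    case True
    let ?f = "f(y := g y)"
    have ne: "f y \<noteq> g y" using y True by (metis imageI)
    have sub: "{x\<in>X. ?f x \<noteq> g x} = {x\<in>X. f x \<noteq> g x} - {y}" by auto
    have "card {x\<in>X. ?f x \<noteq> g x} < card {x\<in>X. f x \<noteq> g x}"
      unfolding sub using True ne fin
      by (intro card_Diff1_less) auto
    moreover have "inj_on ?f X" using less.prems(1) y by (intro inj_on_fun_updI)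
    moreover have "?f ` X \<subseteq> I" using less.prems(2) g y by auto
    moreover have "\<forall>x\<in>X. x \<in> A (?f x)" using less.prems(3) g y by auto
    ultimately show ?thesis using less.hyps by blast
  qed
qed

lemma pt_augment:
  assumes "partial_transversal I A X" "partial_transversal I A Y" "card X < card Y"
  shows "\<exists>y\<in>Y-X. partial_transversal I A (insert y X)"
proof -
  obtain f where f: "inj_on f X" "f ` X \<subseteq> I" "\<forall>x\<in>X. x \<in> A (f x)" "finite X"
    using assms(1) unfolding partial_transversal_def by blast
  obtain g where g: "inj_on g Y" "g ` Y \<subseteq> I" "\<forall>x\<in>Y. x \<in> A (g x)" "finite Y"
    using assms(2) unfolding partial_transversal_def by blast
  show ?thesis using pt_aug_aux[OF f(4) g(4) g(1-3) assms(3) f(1-3)] .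
qed

theorem theorem15:
  fixes E :: "'e set" and I :: "'i set" and A :: "'i \<Rightarrow> 'e set" and k :: 'i
  assumes "finite E" and "finite I" and "\<forall>i\<in>I. A i \<subseteq> E" and "k \<in> I"
  shows "tm_flats E (I - {k}) A \<subseteq> tm_flats E I A"
proof
  fix X assume "X \<in> tm_flats E (I - {k}) A"
  then have XE: "X \<subseteq> E" and cl': "tm_cl E (I - {k}) A X = X" unfolding tm_flats_def by auto
  let ?I' = "I - {k}"
  have "tm_cl E I A X = X"
  proof
    show "X \<subseteq> tm_cl E I A X" using XE unfolding tm_cl_def by (auto simp: insert_absorb)
  next
    show "tm_cl E I A X \<subseteq> X"
    proof
      fix a assume "a \<in> tm_cl E I A X"
      then have aE: "a \<in> E" and req: "tm_rank E I A (X \<union> {a}) = tm_rank E I A X"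
        unfolding tm_cl_def by auto
      show "a \<in> X"
      proof (rule ccontr)
        assume aX: "a \<notin> X"
        then have "a \<notin> tm_cl E ?I' A X" using cl' by simp
        then have rne: "tm_rank E ?I' A (X \<union> {a}) \<noteq> tm_rank E ?I' A X"
          using aE unfolding tm_cl_def by simp
        have key: "partial_transversal ?I' A (insert a B)"
          if B: "B \<subseteq> X" "partial_transversal ?I' A B" "card B = tm_rank E ?I' A X" for B
        proof -
          obtain Y where Y: "Y \<subseteq> (X \<union> {a}) \<inter> E" "partial_transversal ?I' A Y"
            "card Y = tm_rank E ?I' A (X \<union> {a})"
            by (rule rank_obtain[OF assms(1)])
          have "B \<subseteq> (X \<union> {a}) \<inter> E" using B XE by auto
          then have "card B \<le> tm_rank E ?I' A (X \<union> {a})"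
            using rank_ge[OF assms(1)] B(2) by blast
          then have "card B \<le> card Y" using Y(3) by simp
          then have "card B < card Y" using B Y rne by auto
          then obtain y where y: "y \<in> Y - B" "partial_transversal ?I' A (insert y B)"
            using pt_augment[OF B(2) Y(2)] by blast
          show ?thesis
          proof (cases "y = a")
            case True then show ?thesis using y by simp
          next
            case False
            then have "y \<in> X" using y Y by auto
            then have "card (insert y B) \<le> tm_rank E ?I' A X"
              using rank_ge[OF assms(1), of "insert y B" X] y B XE by auto
            moreover have "card (insert y B) = card B + 1"
              using y B unfolding partial_transversal_def by auto
            ultimately show ?thesis using B by auto
          qed
        qed
        obtain J where J: "J \<subseteq> X \<inter> E" "partial_transversal I A J" "card J = tm_rank E I A X"
          by (rule rank_obtain[OF assms(1)])
        obtain B where B: "B \<subseteq> X \<inter> E" "partial_transversal ?I' A B" "card B = tm_rank E ?I' A X"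
          by (rule rank_obtain[OF assms(1)])
        have big: False if "Z \<subseteq> X \<union> {a}" "partial_transversal I A Z" "card Z > card J" for Z
        proof -
          have "card Z \<le> tm_rank E I A (X \<union> {a})"
            using rank_ge[OF assms(1), of Z "X \<union> {a}"] that XE aE by auto
          then show False using that req J by auto
        qed
        show False
        proof (cases "card J \<le> tm_rank E ?I' A X")
          case True
          have "partial_transversal ?I' A (insert a B)" using key B by auto
          then have "partial_transversal I A (insert a B)" by (rule pt_mono_I) auto
          moreover have "card (insert a B) = card B + 1"
          proof -
            have "a \<notin> B" using B aX by blast
            moreover have "finite B" using B(2) unfolding partial_transversal_def by blast
            ultimately show ?thesis by simp
          qed
          ultimately show False using big[of "insert a B"] B True by auto
        next
          case False
          obtain f where f: "inj_on f J" "f ` J \<subseteq> I" "\<forall>x\<in>J. x \<in> A (f x)" "finite J"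
            using J(2) unfolding partial_transversal_def by blast
          have "\<exists>j0\<in>J. f j0 = k"
          proof (rule ccontr)
            assume "\<not> ?thesis"
            then have "partial_transversal ?I' A J"
              unfolding partial_transversal_def using f by auto
            then have "card J \<le> tm_rank E ?I' A X" using rank_ge[OF assms(1)] J by blast
            then show False using False by simp
          qed
          then obtain j0 where j0: "j0 \<in> J" "f j0 = k" by blast
          let ?B = "J - {j0}"
          have ptB: "partial_transversal ?I' A ?B"
            unfolding partial_transversal_def
          proof (intro conjI exI[of _ f])
            show "finite ?B" using f by simp
            show "inj_on f ?B" using f(1) by (rule inj_on_subset) auto
            show "f ` ?B \<subseteq> ?I'" using f(1,2) j0 by (auto simp: inj_on_def)
            show "\<forall>x\<in>?B. x \<in> A (f x)" using f by auto
          qed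
          have "card ?B \<le> tm_rank E ?I' A X" using rank_ge[OF assms(1) _ ptB] J by auto
          moreover have cB: "card ?B = card J - 1" using j0 f by simp
          ultimately have eq: "card ?B = tm_rank E ?I' A X" using False by auto
          have "partial_transversal ?I' A (insert a ?B)" using key[OF _ ptB eq] J by auto
          then obtain g where g: "inj_on g (insert a ?B)" "g ` (insert a ?B) \<subseteq> ?I'"
            "\<forall>x\<in>insert a ?B. x \<in> A (g x)"
            unfolding partial_transversal_def by blast
          have aJ: "a \<notin> J" using J aX by auto
          have ptZ: "partial_transversal I A (insert j0 (insert a ?B))"
            unfolding partial_transversal_def
          proof (intro conjI exI[of _ "g(j0 := k)"])
            show "finite (insert j0 (insert a ?B))" using f by simp
            have j0n: "j0 \<notin> insert a ?B" using j0 aJ by auto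
            have "inj_on (g(j0 := k)) (insert a ?B) = inj_on g (insert a ?B)"
              by (rule inj_on_cong) (use j0n in auto)
            then have "inj_on (g(j0 := k)) (insert a ?B)" using g(1) by simp
            moreover have "(g(j0 := k)) ` (insert a ?B) = g ` (insert a ?B)" using j0 aJ by auto
            ultimately show "inj_on (g(j0 := k)) (insert j0 (insert a ?B))" using g(2) by auto
            show "(g(j0 := k)) ` insert j0 (insert a ?B) \<subseteq> I" using g(2) assms(4) by auto
            show "\<forall>x\<in>insert j0 (insert a ?B). x \<in> A ((g(j0 := k)) x)"
              using g(3) j0 f by auto
          qed
          have "insert j0 (insert a ?B) = insert a J" using j0 by auto
          moreover have "card (insert a J) = card J + 1" using aJ f by simp
          ultimately show False using big[OF _ ptZ] J by auto
        qed
      qed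
    qed
  qed
  then show "X \<in> tm_flats E I A" using XE unfolding tm_flats_def by auto
qed

end
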